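(* Let $\mathfrak e\in\mathbb R^\times$. Define $\widetilde s:SO_2(\mathbb R)\to\mathbb C^\times$ by $\widetilde s(k_t)=e^{-\frac{i\pi\operatorname{sgn}(\mathfrak e)}{4}u'(t)}$ for $-\pi\le t<\pi$. Then for all $g_1,g_2\in SO_2(\mathbb R)$, $$\widetilde c_{\mathfrak e}(g_1,g_2)=\widetilde s(g_1)^{-1}\widetilde s(g_2)^{-1}\widetilde s(g_1g_2);$$ in particular the restriction of the class of $\widetilde c_{\mathfrak e}$ to $SO_2(\mathbb R)$ is trivial.
   Context: For $t\in[-\pi,\pi)$, $k_t=\begin{pmatrix}\cos t&-\sin t\\\sin t&\cos t\end{pmatrix}$, so $SO_2(\mathbb R)=\{k_t:-\pi\le t<\pi\}$. $u:\mathbb R\to\mathbb Z$ is $u(t)=2k$ if $t=k\pi$ ($k\in\mathbb Z$) and $u(t)=2k+1$ if $k\pi<t<(k+1)\pi$; $u'(t)=u(t)+\frac{2}{\pi}t$. For $g_1,g_2\in SL_2(\mathbb R)$ with $g_3=g_1g_2$ and lower-left entries $c_1,c_2,c_3$, $\widetilde c_{\mathfrak e}(g_1,g_2)=e^{\frac{i\pi\operatorname{sgn}(\mathfrak e)}{4}\operatorname{sgn}(c_1c_2c_3)}$ (with $\operatorname{sgn}(0)=0$); this is the Perrin–Rao $\mu_8$-valued cocycle attached to the character $t\mapsto e^{2\pi i\mathfrak et}$. *)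

theory Defs
  imports "HOL-Analysis.Analysis"
begin

definition rot :: "real \<Rightarrow> real^2^2" where
  "rot t = (\<chi> i j. if i = 1 \<and> j = 1 then cos t
                   else if i = 1 \<and> j = 2 then - sin t
                   else if i = 2 \<and> j = 1 then sin t
                   else cos t)"

definition SO2 :: "(real^2^2) set" where
  "SO2 = {rot t | t. - pi \<le> t \<and> t < pi}"

definition u_fun :: "real \<Rightarrow> int" where
  "u_fun t = (if t / pi \<in> \<int> then 2 * \<lfloor>t / pi\<rfloor> else 2 * \<lfloor>t / pi\<rfloor> + 1)"

definition u_prime :: "real \<Rightarrow> real" where
  "u_prime t = real_of_int (u_fun t) + 2 / pi * t"

definition lowleft :: "real^2^2 \<Rightarrow> real" where
  "lowleft g = g $ 2 $ 1"

definition ctilde :: "real \<Rightarrow> real^2^2 \<Rightarrow> real^2^2 \<Rightarrow> complex" where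
  "ctilde e g1 g2 = exp (\<i> * complex_of_real (pi * sgn e / 4
        * sgn (lowleft g1 * lowleft g2 * lowleft (g1 ** g2))))"

definition angle_of :: "real^2^2 \<Rightarrow> real" where
  "angle_of g = (THE t. - pi \<le> t \<and> t < pi \<and> rot t = g)"

definition stilde :: "real \<Rightarrow> real^2^2 \<Rightarrow> complex" where
  "stilde e g = exp (- \<i> * complex_of_real (pi * sgn e / 4 * u_prime (angle_of g)))"

end

theory Submission
  imports Defs
begin

lemma rot_mult: "rot a ** rot b = rot (a + b)"
  by (simp add: vec_eq_iff forall_2 matrix_matrix_mult_def sum_2 rot_def cos_add sin_add)

lemma rot_period: "rot (x + 2 * pi * of_int n) = rot x"
proof -
  have h1: "sin (x + 2 * pi * of_int n) = sin x" and h2: "cos (x + 2 * pi * of_int n) = cos x"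
    using sin_cos_eq_iff by blast+
  show ?thesis unfolding rot_def h1 h2 ..
qed

lemma rot_inj:
  assumes "- pi \<le> s" "s < pi" "- pi \<le> t" "t < pi" "rot s = rot t"
  shows "s = t"
proof -
  have c: "cos s = cos t" and sn: "sin s = sin t"
    using assms(5) unfolding rot_def vec_eq_iff forall_2 by auto
  have "cos (s - t) = 1" using c sn
    by (simp add: cos_diff)
  then obtain n :: int where n: "s - t = real_of_int n * 2 * pi" using cos_one_2pi_int by blast
  have nn: "real_of_int n * (2 * pi) = s - t" using n by simp
  have "real_of_int n * (2 * pi) < 1 * (2 * pi)" using nn assms by linarith
  hence "real_of_int n < 1" by (rule mult_right_less_imp_less) simp
  hence "n < 1" by simp
  moreover have "(-1) * (2 * pi) < real_of_int n * (2 * pi)" using nn assms by linarith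
  hence "-1 < real_of_int n" by (rule mult_right_less_imp_less) simp
  hence "n > -1" by simp
  ultimately have "n = 0" by simp
  then show ?thesis using n by simp
qed

lemma angle_rot: "- pi \<le> t \<Longrightarrow> t < pi \<Longrightarrow> angle_of (rot t) = t"
  unfolding angle_of_def
  by (rule the_equality) (auto intro: rot_inj)

lemma lowleft_rot: "lowleft (rot t) = sin t"
  by (simp add: lowleft_def rot_def)

lemma u_val: assumes "- pi \<le> t" "t < pi"
  shows "u_fun t = (if t = - pi then -2 else if t < 0 then -1 else if t = 0 then 0 else 1)"
proof -
  have p: "pi > 0" by simp
  consider "t = - pi" | "- pi < t \<and> t < 0" | "t = 0" | "0 < t \<and> t < pi" using assms by linarith
  then show ?thesis
  proof cases
    case 1
    have "\<lfloor>- 1 :: real\<rfloor> = -1" by (simp add: floor_eq_iff)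
    then show ?thesis using 1 by (simp add: u_fun_def)
  next
    case 2
    have a: "-1 < t / pi" "t / pi < 0" using 2 p by (auto simp: field_simps)
    have ni: "t / pi \<notin> \<int>"
    proof
      assume "t / pi \<in> \<int>" then obtain k where "t / pi = of_int k" by (auto elim: Ints_cases)
      with a show False by (smt (verit) of_int_less_iff of_int_minus of_int_1 of_int_0 zless_imp_add1_zle)
    qed
    have "\<lfloor>t / pi\<rfloor> = -1" using a by (simp add: floor_eq_iff)
    then show ?thesis using ni 2 by (simp add: u_fun_def)
  next
    case 3 then show ?thesis by (simp add: u_fun_def)
  next
    case 4
    have a: "0 < t / pi" "t / pi < 1" using 4 p by (auto simp: field_simps)
    have ni: "t / pi \<notin> \<int>"
    proof
      assume "t / pi \<in> \<int>" then obtain k where "t / pi = of_int k" by (auto elim: Ints_cases)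
      with a show False by (smt (verit) of_int_less_iff of_int_1 of_int_0 zless_imp_add1_zle)
    qed
    have "\<lfloor>t / pi\<rfloor> = 0" using a by (simp add: floor_eq_iff)
    then show ?thesis using ni 4 by (simp add: u_fun_def)
  qed
qed

lemma sgn_sin_val: assumes "- pi \<le> t" "t < pi"
  shows "sgn (sin t) = (if t = - pi then 0 else if t < 0 then -1 else if t = 0 then 0 else 1)"
proof -
  consider "t = - pi" | "- pi < t \<and> t < 0" | "t = 0" | "0 < t \<and> t < pi" using assms by linarith
  then show ?thesis
  proof cases
    case 2
    then have "sin (- t) > 0" by (intro sin_gt_zero) auto
    then show ?thesis using 2 by simp
  next
    case 4
    then have "sin t > 0" by (intro sin_gt_zero) auto
    then show ?thesis using 4 by simp
  qed auto
qed

theorem mainTheorem15: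
  fixes e :: real and g1 g2 :: "real^2^2"
  assumes "e \<noteq> 0" and "g1 \<in> SO2" and "g2 \<in> SO2"
  shows "ctilde e g1 g2
           = inverse (stilde e g1) * inverse (stilde e g2) * stilde e (g1 ** g2)"
proof -
  obtain a where a: "- pi \<le> a" "a < pi" "g1 = rot a" using assms(2) unfolding SO2_def by auto
  obtain b where b: "- pi \<le> b" "b < pi" "g2 = rot b" using assms(3) unfolding SO2_def by auto
  obtain n :: int where n: "n = (if a + b < - pi then -1 else if a + b < pi then 0 else 1)" by simp
  define c where "c = a + b - 2 * pi * of_int n"
  have c: "- pi \<le> c" "c < pi" using a b unfolding c_def n by auto
  have g3: "g1 ** g2 = rot c"
    using rot_period[of c n] by (simp add: a b rot_mult c_def)
  have g3': "rot a ** rot b = rot c" using g3 a b by simp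
  define \<sigma> where "\<sigma> = sgn e"
  define S where "S = sgn (sin a * sin b * sin c)"
  define D where "D = u_fun a + u_fun b - u_fun c + 4 * n"
  have key: "S - D = 0 \<or> S - D = 8 \<or> S - D = -8"
    unfolding S_def D_def sgn_mult sgn_sin_val[OF a(1,2)] sgn_sin_val[OF b(1,2)] sgn_sin_val[OF c]
      u_val[OF a(1,2)] u_val[OF b(1,2)] u_val[OF c]
    using a(1,2) b(1,2) c n unfolding c_def by (auto split: if_splits)
  have lhs: "ctilde e g1 g2 = exp (\<i> * complex_of_real (pi * \<sigma> / 4 * S))"
    by (simp add: ctilde_def g3' lowleft_rot a b S_def \<sigma>_def)
  have rhs: "inverse (stilde e g1) * inverse (stilde e g2) * stilde e (g1 ** g2)
     = exp (\<i> * complex_of_real (pi * \<sigma> / 4 * (u_prime a + u_prime b - u_prime c)))"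
  proof -
    have "inverse (stilde e g1) * inverse (stilde e g2) * stilde e (g1 ** g2)
      = exp (\<i> * complex_of_real (pi * \<sigma> / 4 * u_prime a) + \<i> * complex_of_real (pi * \<sigma> / 4 * u_prime b)
         - \<i> * complex_of_real (pi * \<sigma> / 4 * u_prime c))"
      by (simp add: stilde_def g3' a b angle_rot c \<sigma>_def exp_minus[symmetric] exp_add[symmetric]
        exp_diff)
    also have "\<dots> = exp (\<i> * complex_of_real (pi * \<sigma> / 4 * (u_prime a + u_prime b - u_prime c)))"
      by (rule arg_cong[where f=exp]) (simp add: algebra_simps)
    finally show ?thesis .
  qed
  have up: "u_prime a + u_prime b - u_prime c = D"
    unfolding u_prime_def D_def c_def by (simp add: field_simps)
  have "\<exists>k::int. S - D = 8 * k"
    using key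
  proof (elim disjE)
    assume "S - D = 0" then show ?thesis by (intro exI[of _ 0]) simp
  next
    assume "S - D = 8" then show ?thesis by (intro exI[of _ 1]) simp
  next
    assume "S - D = -8" then show ?thesis by (intro exI[of _ "-1"]) simp
  qed
  then obtain k :: int where k: "S - D = 8 * real_of_int k" by blast
  have "\<exists>m::int. \<sigma> = of_int m" using assms(1) unfolding \<sigma>_def
    by (cases "e > 0") (auto simp: sgn_real_def intro: exI[of _ 1] exI[of _ "-1"])
  then obtain m :: int where m: "\<sigma> = of_int m" by blast
  have "\<i> * complex_of_real (pi * \<sigma> / 4 * S) = \<i> * complex_of_real (pi * \<sigma> / 4 * D)
        + of_int (2 * (m * k)) * pi * \<i>"
  proof -
    have "pi * \<sigma> / 4 * S = pi * \<sigma> / 4 * D + 2 * pi * (m * k)"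
      using k m by (simp add: algebra_simps)
    then have "complex_of_real (pi * \<sigma> / 4 * S) = complex_of_real (pi * \<sigma> / 4 * D) + of_int (2 * (m * k)) * pi"
      by (simp add: algebra_simps)
    then show ?thesis by (simp add: algebra_simps)
  qed
  then have "exp (\<i> * complex_of_real (pi * \<sigma> / 4 * S)) = exp (\<i> * complex_of_real (pi * \<sigma> / 4 * D))"
    using exp_eq by blast
  then show ?thesis using lhs rhs up by simp
qed

end
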